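(* Let $X\in\mathrm{St}(n,k)$ and $\xi=(\xi_1,\xi_2)\in\mathfrak{so}(n)\times\mathfrak{so}(k)$. The horizontal lift through $q(0)=(I_n,I_k)$ of $\widehat\beta(t)=(\iota_X\circ\pi)(\exp(t\xi))=e^{t\xi_1}Xe^{-t\xi_2}$ is $$q(t)=\exp(t\xi)\exp(-t\xi_{\mathfrak h})=\big(e^{t\xi_1}e^{-t\xi_{1,\mathfrak h}},\,e^{t\xi_2}e^{-t\xi_{2,\mathfrak h}}\big),$$ and it is the solution of $\dot q(t)=d_{(I_n,I_k)}L_{q(t)}\,\mathrm{Ad}_{\exp(t\xi_{\mathfrak h})}(\xi_{\mathfrak p})$, $q(0)=(I_n,I_k)$.
   Context: $\mathrm{St}(n,k)=\{Y\in\mathbb{R}^{n\times k}:Y^\top Y=I_k\}$; $G=O(n)\times O(k)$ acts by $(R,\theta)\cdot Y=RY\theta^\top$, $H$ is the stabilizer of $X$, $\pi\colon G\to G/H$, $\iota_X((R,\theta)H)=RX\theta^\top$. On $\mathfrak g=\mathfrak{so}(n)\times\mathfrak{so}(k)$ the scalar product is $\langle(\Omega_1,\Psi_1),(\Omega_2,\Psi_2)\rangle=-\operatorname{tr}(\Omega_1\Omega_2)+2\operatorname{tr}(\Psi_1\Psi_2)$; $\mathfrak h=\{(\Omega,\eta):\Omega X=X\eta\}$, $\mathfrak p=\mathfrak h^\perp$, $\mathfrak g=\mathfrak h\oplus\mathfrak p$, and $\xi_{\mathfrak h}=(\xi_{1,\mathfrak h},\xi_{2,\mathfrak h})$, $\xi_{\mathfrak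 p}$ are the components of $\xi$. A horizontal lift of $\widehat\beta$ is a curve $q$ in $G$ with $(\iota_X\circ\pi)(q(t))=\widehat\beta(t)$ and $q(t)^{-1}\dot q(t)\in\mathfrak p$. *)

theory Defs
  imports "HOL-Analysis.Analysis"
begin

type_synonym ('n,'k) gelt = "(real^'n^'n) \<times> (real^'k^'k)"

fun mpow :: "real^'n^'n \<Rightarrow> nat \<Rightarrow> real^'n^'n" where
  "mpow A 0 = mat 1"
| "mpow A (Suc m) = A ** mpow A m"

definition mexp :: "real^'n^'n \<Rightarrow> real^'n^'n" where
  "mexp A = (\<Sum>m. (1 / fact m) *\<^sub>R mpow A m)"

definition stiefel :: "(real^'k^'n) set" where
  "stiefel = {Y. transpose Y ** Y = mat 1}"

definition skew :: "real^'n^'n \<Rightarrow> bool" where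
  "skew A \<longleftrightarrow> transpose A = - A"

definition gip :: "('n::finite,'k::finite) gelt \<Rightarrow> ('n::finite,'k::finite) gelt \<Rightarrow> real" where
  "gip a b = - trace (fst a ** fst b) + 2 * trace (snd a ** snd b)"

definition hlie :: "real^'k^'n \<Rightarrow> ('n::finite,'k::finite) gelt set" where
  "hlie X = {(\<Omega>, \<eta>). skew \<Omega> \<and> skew \<eta> \<and> \<Omega> ** X = X ** \<eta>}"

definition plie :: "real^'k^'n \<Rightarrow> ('n::finite,'k::finite) gelt set" where
  "plie X = {(\<Omega>, \<Psi>). skew \<Omega> \<and> skew \<Psi> \<and> (\<forall>z\<in>hlie X. gip (\<Omega>, \<Psi>) z = 0)}"

definition hcomp :: "real^'k^'n \<Rightarrow> ('n::finite,'k::finite) gelt \<Rightarrow> ('n::finite,'k::finite) gelt" where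
  "hcomp X \<xi> = (THE \<zeta>. \<zeta> \<in> hlie X \<and> (fst \<xi> - fst \<zeta>, snd \<xi> - snd \<zeta>) \<in> plie X)"

definition pcomp :: "real^'k^'n \<Rightarrow> ('n::finite,'k::finite) gelt \<Rightarrow> ('n::finite,'k::finite) gelt" where
  "pcomp X \<xi> = (fst \<xi> - fst (hcomp X \<xi>), snd \<xi> - snd (hcomp X \<xi>))"

definition iotapi :: "real^'k^'n \<Rightarrow> ('n::finite,'k::finite) gelt \<Rightarrow> real^'k^'n" where
  "iotapi X g = fst g ** X ** transpose (snd g)"

definition gmul :: "('n::finite,'k::finite) gelt \<Rightarrow> ('n::finite,'k::finite) gelt \<Rightarrow> ('n::finite,'k::finite) gelt" where
  "gmul a b = (fst a ** fst b, snd a ** snd b)"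

definition ginv :: "('n::finite,'k::finite) gelt \<Rightarrow> ('n::finite,'k::finite) gelt" where
  "ginv a = (matrix_inv (fst a), matrix_inv (snd a))"

definition Gset :: "('n::finite,'k::finite) gelt set" where
  "Gset = {g. orthogonal_matrix (fst g) \<and> orthogonal_matrix (snd g)}"

definition gexp :: "('n::finite,'k::finite) gelt \<Rightarrow> ('n::finite,'k::finite) gelt" where
  "gexp \<xi> = (mexp (fst \<xi>), mexp (snd \<xi>))"

definition gscale :: "real \<Rightarrow> ('n::finite,'k::finite) gelt \<Rightarrow> ('n::finite,'k::finite) gelt" where
  "gscale t \<xi> = (t *\<^sub>R fst \<xi>, t *\<^sub>R snd \<xi>)"

definition Ad :: "('n::finite,'k::finite) gelt \<Rightarrow> ('n::finite,'k::finite) gelt \<Rightarrow> ('n::finite,'k::finite) gelt" where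
  "Ad g \<zeta> = gmul (gmul g \<zeta>) (ginv g)"

definition dL :: "('n::finite,'k::finite) gelt \<Rightarrow> ('n::finite,'k::finite) gelt \<Rightarrow> ('n::finite,'k::finite) gelt" where
  "dL q \<zeta> = gmul q \<zeta>"

definition gone :: "('n::finite,'k::finite) gelt" where
  "gone = (mat 1, mat 1)"

definition curve_deriv :: "(real \<Rightarrow> ('n::finite,'k::finite) gelt) \<Rightarrow> (real \<Rightarrow> ('n::finite,'k::finite) gelt) \<Rightarrow> bool" where
  "curve_deriv q q' \<longleftrightarrow> (\<forall>t. ((\<lambda>s. fst (q s)) has_vector_derivative fst (q' t)) (at t) \<and>
                             ((\<lambda>s. snd (q s)) has_vector_derivative snd (q' t)) (at t))"

definition horizontal_lift :: "real^'k^'n \<Rightarrow> (real \<Rightarrow> real^'k^'n) \<Rightarrow> ('n::finite,'k::finite) gelt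
   \<Rightarrow> (real \<Rightarrow> ('n::finite,'k::finite) gelt) \<Rightarrow> bool" where
  "horizontal_lift X bhat q0 q \<longleftrightarrow> q 0 = q0 \<and> (\<forall>t. q t \<in> Gset) \<and>
     (\<exists>q'. curve_deriv q q' \<and> (\<forall>t. iotapi X (q t) = bhat t \<and> gmul (ginv (q t)) (q' t) \<in> plie X))"

end

theory Submission
  imports Defs
begin


lemma mm_add_right: "((A::real^'n^'m) + B) ** C = A ** C + B ** C"
  by (vector matrix_matrix_mult_def sum.distrib[symmetric] field_simps)
lemma mm_diff_right: "((A::real^'n^'m) - B) ** C = A ** C - B ** C"
  by (vector matrix_matrix_mult_def sum_subtractf[symmetric] field_simps)
lemma mm_diff_left: "(C::real^'n^'m) ** (A - B) = C ** A - C ** B"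
  by (vector matrix_matrix_mult_def sum_subtractf[symmetric] field_simps)
lemma mm_neg_right: "(- (A::real^'n^'m)) ** C = - (A ** C)"
  by (vector matrix_matrix_mult_def sum_negf[symmetric] field_simps)
lemma mm_neg_left: "(C::real^'n^'m) ** (- A) = - (C ** A)"
  by (vector matrix_matrix_mult_def sum_negf[symmetric] field_simps)
lemma mm_scale_right: "((k *\<^sub>R A)::real^'n^'m) ** C = k *\<^sub>R (A ** C)"
  by (simp add: scalar_matrix_assoc)
lemma mm_scale_left: "(C::real^'n^'m) ** (k *\<^sub>R A) = k *\<^sub>R (C ** A)"
  by (simp add: matrix_scalar_ac scalar_matrix_assoc)

typedef ('n::finite) sqm = "UNIV :: (real^'n^'n) set" morphisms mo sq by auto

setup_lifting type_definition_sqm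

instantiation sqm :: (finite) real_normed_vector
begin
lift_definition zero_sqm :: "'a sqm" is 0 .
lift_definition plus_sqm :: "'a sqm \<Rightarrow> 'a sqm \<Rightarrow> 'a sqm" is "(+)" .
lift_definition minus_sqm :: "'a sqm \<Rightarrow> 'a sqm \<Rightarrow> 'a sqm" is "(-)" .
lift_definition uminus_sqm :: "'a sqm \<Rightarrow> 'a sqm" is uminus .
lift_definition scaleR_sqm :: "real \<Rightarrow> 'a sqm \<Rightarrow> 'a sqm" is scaleR .
lift_definition norm_sqm :: "'a sqm \<Rightarrow> real" is "\<lambda>A. onorm ((*v) A)" .
definition dist_sqm :: "'a sqm \<Rightarrow> 'a sqm \<Rightarrow> real"
  where "dist_sqm a b = norm (a - b)"
definition
  "(uniformity :: ('a sqm \<times> 'a sqm) filter) = (INF e\<in>{0 <..}. principal {(x, y). dist x y < e})"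
definition open_sqm :: "'a sqm set \<Rightarrow> bool"
  where "open_sqm S = (\<forall>x\<in>S. \<forall>\<^sub>F (x', y) in uniformity. x' = x \<longrightarrow> y \<in> S)"
definition sgn_sqm :: "'a sqm \<Rightarrow> 'a sqm"
  where "sgn_sqm x = scaleR (inverse (norm x)) x"
instance
proof
  fix a b :: "'a sqm" and r s :: real
  show "a + b + c = a + (b + c)" for c by transfer (simp add: algebra_simps)
  show "a + b = b + a" by transfer (simp add: algebra_simps)
  show "0 + a = a" by transfer simp
  show "- a + a = 0" by transfer simp
  show "a - b = a + - b" by transfer simp
  show "r *\<^sub>R (a + b) = r *\<^sub>R a + r *\<^sub>R b" by transfer (simp add: algebra_simps)
  show "(r + s) *\<^sub>R a = r *\<^sub>R a + s *\<^sub>R a" by transfer (simp add: algebra_simps)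
  show "r *\<^sub>R s *\<^sub>R a = (r * s) *\<^sub>R a" by transfer simp
  show "1 *\<^sub>R a = a" by transfer simp
  show "dist a b = norm (a - b)" by (simp add: dist_sqm_def)
  show "sgn a = inverse (norm a) *\<^sub>R a" by (simp add: sgn_sqm_def)
  show "(uniformity :: ('a sqm \<times> 'a sqm) filter) = (INF e\<in>{0 <..}. principal {(x, y). dist x y < e})"
    by (simp add: uniformity_sqm_def)
  show "open U = (\<forall>x\<in>U. \<forall>\<^sub>F (x', y) in uniformity. x' = x \<longrightarrow> y \<in> U)" for U :: "'a sqm set"
    by (simp add: open_sqm_def)
  show "(norm a = 0) = (a = 0)"
    apply transfer
    apply (simp add: onorm_eq_0)
    by (metis matrix_vector_mult_0 matrix_eq)
  show "norm (a + b) \<le> norm a + norm b"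
  proof transfer
    fix a b :: "real^'a^'a"
    have "(*v) (a + b) = (\<lambda>x. a *v x + b *v x)" by (simp add: fun_eq_iff matrix_vector_mult_add_rdistrib)
    then show "onorm ((*v) (a + b)) \<le> onorm ((*v) a) + onorm ((*v) b)"
      using onorm_triangle[OF matrix_vector_mul_bounded_linear matrix_vector_mul_bounded_linear] by simp
  qed
  show "norm (r *\<^sub>R a) = \<bar>r\<bar> * norm a"
  proof transfer
    fix a :: "real^'a^'a" and r :: real
    have "(*v) (r *\<^sub>R a) = (\<lambda>x. r *\<^sub>R (a *v x))" by (simp add: fun_eq_iff scaleR_matrix_vector_assoc)
    then show "onorm ((*v) (r *\<^sub>R a)) = \<bar>r\<bar> * onorm ((*v) a)"
      using onorm_scaleR[OF matrix_vector_mul_bounded_linear] by simp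
  qed
qed
end


lemma entry_le_norm: "\<bar>(A::real^'n^'m) $ i $ j\<bar> \<le> norm A"
  by (meson component_le_norm_cart Finite_Cartesian_Product.norm_nth_le order_trans)

lemma norm_le_entries: "norm (A::real^'n^'m) \<le> (\<Sum>i\<in>UNIV. \<Sum>j\<in>UNIV. \<bar>A $ i $ j\<bar>)"
proof -
  have "norm A \<le> (\<Sum>i\<in>UNIV. norm (A $ i))" unfolding norm_vec_def by (rule L2_set_le_sum) simp
  also have "\<dots> \<le> (\<Sum>i\<in>UNIV. \<Sum>j\<in>UNIV. \<bar>A $ i $ j\<bar>)" by (intro sum_mono norm_le_l1_cart)
  finally show ?thesis .
qed

lemma bl_mo: "bounded_linear (mo :: 'n::finite sqm \<Rightarrow> _)"
proof (rule bounded_linear_intro[where K="real CARD('n) * real CARD('n)"])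
  fix x y :: "'n sqm" and r :: real
  show "mo (x + y) = mo x + mo y" by transfer simp
  show "mo (r *\<^sub>R x) = r *\<^sub>R mo x" by transfer simp
  have "norm (mo x) \<le> (\<Sum>i\<in>UNIV. \<Sum>j\<in>UNIV. \<bar>mo x $ i $ j\<bar>)" by (rule norm_le_entries)
  also have "\<dots> \<le> (\<Sum>i\<in>(UNIV::'n set). \<Sum>j\<in>(UNIV::'n set). norm x)"
    by (intro sum_mono) (simp add: norm_sqm.rep_eq matrix_component_le_onorm)
  also have "\<dots> = norm x * (real CARD('n) * real CARD('n))" by simp
  finally show "norm (mo x) \<le> norm x * (real CARD('n) * real CARD('n))" .
qed

lemma bl_sq: "bounded_linear (sq :: _ \<Rightarrow> 'n::finite sqm)"
proof (rule bounded_linear_intro[where K="real CARD('n) * real CARD('n)"])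
  fix x y :: "real^'n^'n" and r :: real
  show "sq (x + y) = sq x + sq y" by (simp add: plus_sqm.abs_eq)
  show "sq (r *\<^sub>R x) = r *\<^sub>R sq x" by (simp add: scaleR_sqm.abs_eq)
  have "norm (sq x) \<le> (\<Sum>i\<in>UNIV. \<Sum>j\<in>UNIV. \<bar>x $ i $ j\<bar>)"
    by (simp add: norm_sqm.abs_eq onorm_le_matrix_component_sum)
  also have "\<dots> \<le> (\<Sum>i\<in>(UNIV::'n set). \<Sum>j\<in>(UNIV::'n set). norm x)"
    by (intro sum_mono entry_le_norm)
  also have "\<dots> = norm x * (real CARD('n) * real CARD('n))" by simp
  finally show "norm (sq x) \<le> norm x * (real CARD('n) * real CARD('n))" .
qed

instantiation sqm :: (finite) real_normed_algebra_1
begin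
lift_definition one_sqm :: "'a sqm" is "mat 1" .
lift_definition times_sqm :: "'a sqm \<Rightarrow> 'a sqm \<Rightarrow> 'a sqm" is "(**)" .
instance
proof
  fix a b c :: "'a sqm" and r :: real
  show "a * b * c = a * (b * c)" by transfer (simp add: matrix_mul_assoc)
  show "1 * a = a" by transfer simp
  show "a * 1 = a" by transfer simp
  show "(a + b) * c = a * c + b * c" by transfer (simp add: mm_add_right)
  show "a * (b + c) = a * b + a * c" by transfer (simp add: matrix_add_ldistrib)
  show "(0::'a sqm) \<noteq> 1" apply transfer apply (simp add: mat_def vec_eq_iff) done
  show "r *\<^sub>R a * b = r *\<^sub>R (a * b)" by transfer (simp add: mm_scale_right)
  show "a * r *\<^sub>R b = r *\<^sub>R (a * b)" by transfer (simp add: mm_scale_left)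
  show "norm (1::'a sqm) = 1"
  proof transfer
    have "(*v) (mat 1 :: real^'a^'a) = (\<lambda>x. x)" by (simp add: fun_eq_iff)
    then show "onorm ((*v) (mat 1 :: real^'a^'a)) = 1" by (simp add: onorm_id)
  qed
  show "norm (a * b) \<le> norm a * norm b"
  proof transfer
    fix a b :: "real^'a^'a"
    have "(*v) (a ** b) = (*v) a \<circ> (*v) b" by (simp add: fun_eq_iff matrix_vector_mul_assoc)
    then show "onorm ((*v) (a ** b)) \<le> onorm ((*v) a) * onorm ((*v) b)"
      using onorm_compose[OF matrix_vector_mul_bounded_linear matrix_vector_mul_bounded_linear] by simp
  qed
qed
end

instance sqm :: (finite) banach
proof
  fix X :: "nat \<Rightarrow> 'a sqm"
  assume "Cauchy X"
  then have "Cauchy (\<lambda>n. mo (X n))" by (rule bounded_linear.Cauchy[OF bl_mo])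
  then obtain L where "(\<lambda>n. mo (X n)) \<longlonglongrightarrow> L" using Cauchy_convergent_iff convergent_def by blast
  then have "(\<lambda>n. sq (mo (X n))) \<longlonglongrightarrow> sq L" by (rule bounded_linear.tendsto[OF bl_sq])
  then show "convergent X" by (auto simp: mo_inverse convergent_def)
qed


lemma mo_mult: "mo (x * y) = mo x ** mo y" by (simp add: times_sqm.rep_eq)
lemma mo_one: "mo 1 = mat 1" by (simp add: one_sqm.rep_eq)
lemma mo_scaleR: "mo (r *\<^sub>R x) = r *\<^sub>R mo x" by (simp add: scaleR_sqm.rep_eq)
lemma sq_scaleR: "sq (r *\<^sub>R x) = r *\<^sub>R sq x" by (simp add: scaleR_sqm.abs_eq)
lemma sq_uminus: "sq (- x) = - sq x" by (simp add: uminus_sqm.abs_eq)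
lemma sq_zero: "sq 0 = 0" by (simp add: zero_sqm.abs_eq)

lemma mpow_mo: "mpow A m = mo (sq A ^ m)"
  by (induction m) (simp_all add: mo_mult mo_one sq_inverse)

lemma mexp_mo: "mexp A = mo (exp (sq A))"
proof -
  have "mo (exp (sq A)) = (\<Sum>n. mo (sq A ^ n /\<^sub>R fact n))"
    unfolding exp_def by (rule bounded_linear.suminf[OF bl_mo summable_exp_generic])
  also have "\<dots> = mexp A"
    unfolding mexp_def mpow_mo by (simp add: mo_scaleR divide_inverse_commute)
  finally show ?thesis by simp
qed

lemma mexp_sums: "(\<lambda>m. (1 / fact m) *\<^sub>R mpow A m) sums mexp A"
proof -
  have "(\<lambda>n. mo (sq A ^ n /\<^sub>R fact n)) sums mo (exp (sq A))"
    by (rule bounded_linear.sums[OF bl_mo exp_converges])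
  then show ?thesis unfolding mexp_mo mpow_mo by (simp add: mo_scaleR divide_inverse_commute)
qed

lemma mexp_transfer:
  assumes "bounded_linear L1" "bounded_linear L2" "\<And>m. L1 (mpow A m) = L2 (mpow B m)"
  shows "L1 (mexp A) = L2 (mexp B)"
proof -
  have "(\<lambda>m. L1 ((1 / fact m) *\<^sub>R mpow A m)) sums L1 (mexp A)"
    by (rule bounded_linear.sums[OF assms(1) mexp_sums])
  moreover have "(\<lambda>m. L2 ((1 / fact m) *\<^sub>R mpow B m)) sums L2 (mexp B)"
    by (rule bounded_linear.sums[OF assms(2) mexp_sums])
  moreover have "(\<lambda>m. L1 ((1 / fact m) *\<^sub>R mpow A m)) = (\<lambda>m. L2 ((1 / fact m) *\<^sub>R mpow B m))"
    using assms by (simp add: linear_scale bounded_linear.linear)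
  ultimately show ?thesis using sums_unique2 by metis
qed

lemma bilinear_mm: "bilinear ((**) :: real^'n^'m \<Rightarrow> real^'p^'n \<Rightarrow> real^'p^'m)"
  unfolding bilinear_def
  by (auto intro!: linearI simp: matrix_add_ldistrib mm_add_right mm_scale_left mm_scale_right)

lemma bb_mm: "bounded_bilinear ((**) :: real^'n^'m \<Rightarrow> real^'p^'n \<Rightarrow> real^'p^'m)"
  using bilinear_mm bilinear_conv_bounded_bilinear by blast

lemma bl_mm_left: "bounded_linear (\<lambda>M::real^'n^'m. M ** (X::real^'p^'n))"
  by (rule bounded_bilinear.bounded_linear_left[OF bb_mm])
lemma bl_mm_right: "bounded_linear (\<lambda>M::real^'p^'n. (X::real^'n^'m) ** M)"
  by (rule bounded_bilinear.bounded_linear_right[OF bb_mm])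

lemma bl_transpose: "bounded_linear (transpose :: real^'n^'m \<Rightarrow> real^'m^'n)"
proof -
  have "linear (transpose :: real^'n^'m \<Rightarrow> real^'m^'n)"
    by (rule linearI) (simp_all add: transpose_def vec_eq_iff)
  then show ?thesis using linear_conv_bounded_linear by blast
qed

lemma mpow_intertwine:
  assumes "A ** X = X ** B"
  shows "mpow A m ** X = X ** mpow B m"
proof (induction m)
  case 0 then show ?case by simp
next
  case (Suc m)
  have "mpow A (Suc m) ** X = A ** (mpow A m ** X)" by (simp add: matrix_mul_assoc)
  also have "\<dots> = (A ** X) ** mpow B m" by (simp add: Suc matrix_mul_assoc)
  also have "\<dots> = X ** mpow B (Suc m)" by (simp add: assms matrix_mul_assoc)
  finally show ?case .
qed

lemma mexp_intertwine:
  assumes "A ** X = X ** B"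
  shows "mexp A ** X = X ** mexp B"
  using mexp_transfer[OF bl_mm_left bl_mm_right mpow_intertwine[OF assms]] .

lemma mpow_transpose: "transpose (mpow A m) = mpow (transpose A) m"
proof (induction m)
  case 0 then show ?case by simp
next
  case (Suc m)
  have "transpose (mpow A (Suc m)) = mpow (transpose A) m ** transpose A"
    by (simp add: matrix_transpose_mul Suc)
  also have "\<dots> = transpose A ** mpow (transpose A) m"
    using mpow_intertwine[of "transpose A" "transpose A" "transpose A" m] by simp
  finally show ?case by simp
qed

lemma mexp_transpose: "transpose (mexp (A::real^'n^'n)) = mexp (transpose A)"
proof -
  have "transpose (mexp A) = (\<lambda>x. x) (mexp (transpose A))"
    by (rule mexp_transfer[OF bl_transpose bounded_linear_ident]) (simp add: mpow_transpose)
  then show ?thesis by simp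
qed

lemma mexp_zero: "mexp 0 = mat 1"
  by (simp add: mexp_mo sq_zero mo_one)

lemma mexp_minus_inv: "mexp A ** mexp (- A) = mat 1"
  by (simp add: mexp_mo sq_uminus mo_mult[symmetric] exp_minus_inverse mo_one)

lemma mexp_minus_inv2: "mexp (- A) ** mexp A = mat 1"
  using mexp_minus_inv[of "- A"] by simp

lemma mexp_comm: "mexp A ** A = A ** mexp A"
  using mexp_intertwine[of A A A] by simp

lemma mexp_deriv: "((\<lambda>t. mexp (t *\<^sub>R A)) has_vector_derivative (mexp (t *\<^sub>R A) ** A)) (at t)"
proof -
  have "((\<lambda>t. mo (exp (t *\<^sub>R sq A))) has_vector_derivative mo (exp (t *\<^sub>R sq A) * sq A)) (at t)"
    by (rule bounded_linear.has_vector_derivative[OF bl_mo exp_scaleR_has_vector_derivative_right])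
  then show ?thesis by (simp add: mexp_mo sq_scaleR mo_mult sq_inverse)
qed

lemma mm_deriv:
  assumes "(f has_vector_derivative f') (at t)" "(g has_vector_derivative g') (at t)"
  shows "((\<lambda>t. (f t :: real^'n^'m) ** (g t :: real^'p^'n)) has_vector_derivative (f t ** g' + f' ** g t)) (at t)"
  by (rule bounded_bilinear.has_vector_derivative[OF bb_mm assms])



lemma transpose_add: "transpose ((A::real^'n^'m) + B) = transpose A + transpose B"
  by (simp add: transpose_def vec_eq_iff)
lemma transpose_diff: "transpose ((A::real^'n^'m) - B) = transpose A - transpose B"
  by (simp add: transpose_def vec_eq_iff)
lemma transpose_neg: "transpose (- (A::real^'n^'m)) = - transpose A"
  by (simp add: transpose_def vec_eq_iff)
lemma trace_scale: "trace (c *\<^sub>R (A::real^'n^'n)) = c * trace A"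
  by (simp add: trace_def sum_distrib_left)
lemma trace_neg: "trace (- (A::real^'n^'n)) = - trace A"
  by (simp add: trace_def sum_negf)

lemma trace_zero': "trace (0::real^'n^'n) = 0"
  by (simp add: trace_def)

lemma skew_add: "skew A \<Longrightarrow> skew B \<Longrightarrow> skew (A + B)"
  by (simp add: skew_def transpose_add)
lemma skew_diff: "skew A \<Longrightarrow> skew B \<Longrightarrow> skew (A - B)"
  by (simp add: skew_def transpose_diff)
lemma skew_neg: "skew A \<Longrightarrow> skew (- A)"
  by (simp add: skew_def transpose_neg)
lemma skew_scale: "skew A \<Longrightarrow> skew (c *\<^sub>R A)"
  by (simp add: skew_def transpose_scalar)
lemma skew_conj: "skew A \<Longrightarrow> skew (B ** A ** transpose B)"
proof -
  assume "skew A"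
  have "transpose (B ** A ** transpose B) = B ** transpose A ** transpose B"
    by (simp only: matrix_transpose_mul transpose_transpose matrix_mul_assoc)
  also have "\<dots> = - (B ** A ** transpose B)"
    using \<open>skew A\<close> by (simp add: skew_def mm_neg_left mm_neg_right)
  finally show ?thesis by (simp add: skew_def)
qed

lemma trace_sq_skew: "skew (S::real^'n^'n) \<Longrightarrow> trace (S ** S) = - (\<Sum>i\<in>UNIV. \<Sum>j\<in>UNIV. (S $ i $ j)^2)"
proof -
  assume "skew S"
  then have s: "S $ j $ i = - S $ i $ j" for i j
    proof -
    have "S $ j $ i = transpose S $ i $ j" by (simp add: transpose_def)
    also have "\<dots> = - S $ i $ j" using \<open>skew S\<close> by (simp add: skew_def)
    finally show ?thesis .
  qed
  show ?thesis
  proof -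
    have "trace (S ** S) = (\<Sum>i\<in>UNIV. \<Sum>j\<in>UNIV. S $ i $ j * S $ j $ i)"
      by (simp add: trace_def matrix_matrix_mult_def)
    also have "\<dots> = (\<Sum>i\<in>UNIV. \<Sum>j\<in>UNIV. - ((S $ i $ j)^2))"
    proof (intro sum.cong refl)
      fix i j
      show "S $ i $ j * S $ j $ i = - ((S $ i $ j)^2)"
        using s[of i j] by (simp add: power2_eq_square)
    qed
    finally show ?thesis by (simp add: sum_negf)
  qed
qed

lemma trace_sq_skew_le: "skew (S::real^'n^'n) \<Longrightarrow> trace (S ** S) \<le> 0"
  by (simp add: trace_sq_skew sum_nonneg)

lemma trace_sq_skew_0: "skew (S::real^'n^'n) \<Longrightarrow> trace (S ** S) = 0 \<Longrightarrow> S = 0"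
proof -
  assume sk: "skew S" and t: "trace (S ** S) = 0"
  have "(\<Sum>i\<in>UNIV. \<Sum>j\<in>UNIV. (S $ i $ j)^2) = 0" using t trace_sq_skew[OF sk] by simp
  then have "\<forall>i\<in>UNIV. (\<Sum>j\<in>UNIV. (S $ i $ j)^2) = 0"
    by (subst sum_nonneg_eq_0_iff[symmetric]) (auto intro: sum_nonneg)
  then have "\<forall>i j. (S $ i $ j)^2 = 0" by (simp add: sum_nonneg_eq_0_iff)
  then show "S = 0" by (simp add: vec_eq_iff)
qed


lemma assoc_rule: "A ** B = C \<Longrightarrow> A ** (B ** Y) = C ** Y"
  by (metis matrix_mul_assoc)

lemmas massoc = matrix_mul_assoc[symmetric]

definition Qr :: "real^'k^'n \<Rightarrow> real^'n^'n" where
  "Qr X = mat 1 - X ** transpose X"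

definition heta :: "real^'k^'n \<Rightarrow> ('n::finite,'k::finite) gelt \<Rightarrow> real^'k^'k" where
  "heta Y \<xi> = 2 *\<^sub>R snd \<xi> - transpose Y ** fst \<xi> ** Y"
definition hOm :: "real^'k^'n \<Rightarrow> ('n::finite,'k::finite) gelt \<Rightarrow> real^'n^'n" where
  "hOm Y \<xi> = Y ** heta Y \<xi> ** transpose Y + Qr Y ** fst \<xi> ** Qr Y"

context
  fixes X :: "real^'k^'n"
  assumes XX: "transpose X ** X = mat 1"
begin

lemma XX2: "transpose X ** (X ** Y) = Y"
  using assoc_rule[OF XX] by simp
declare XX2[simp] XX[simp]

lemma QX: "Qr X ** X = 0"
  by (simp add: Qr_def mm_diff_right massoc XX)
lemma QX2: "Qr X ** (X ** Y) = 0"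
  using assoc_rule[OF QX] by simp
lemma XQ: "transpose X ** Qr X = 0"
  by (simp add: Qr_def mm_diff_left massoc XX2)
lemma XQ2: "transpose X ** (Qr X ** Y) = 0"
  using assoc_rule[OF XQ] by simp
lemma tQ: "transpose (Qr X) = Qr X"
  by (simp add: Qr_def transpose_diff matrix_transpose_mul)
lemma QQ: "Qr X ** Qr X = Qr X"
proof -
  have "Qr X ** Qr X = Qr X - Qr X ** (X ** transpose X)"
    by (subst (2) Qr_def) (simp add: mm_diff_left)
  then show ?thesis by (simp add: QX2)
qed
lemma QQ2: "Qr X ** (Qr X ** Y) = Qr X ** Y"
  by (rule assoc_rule[OF QQ])

lemma hl_decomp:
  assumes "(\<Omega>, \<mu>) \<in> hlie X"
  shows "\<Omega> = X ** \<mu> ** transpose X + Qr X ** \<Omega> ** Qr X"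
proof -
  have sk: "skew \<Omega>" "skew \<mu>" and OX: "\<Omega> ** X = X ** \<mu>" using assms by (auto simp: hlie_def)
  have "transpose X ** \<Omega> = transpose (transpose \<Omega> ** X)"
    by (simp add: matrix_transpose_mul)
  also have "\<dots> = transpose (- (X ** \<mu>))" using sk OX by (simp add: skew_def mm_neg_right)
  also have "\<dots> = \<mu> ** transpose X" using sk
    by (simp add: transpose_neg matrix_transpose_mul skew_def mm_neg_right)
  finally have XO: "transpose X ** \<Omega> = \<mu> ** transpose X" .
  have "Qr X ** \<Omega> ** Qr X = \<Omega> - X ** \<mu> ** transpose X"
    by (simp add: Qr_def mm_diff_left mm_diff_right massoc XO assoc_rule[OF XO] assoc_rule[OF OX] XX2)
  then show ?thesis by simp
qed


lemma gip_h:
  assumes "(\<Omega>, \<mu>) \<in> hlie X"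
  shows "gip (\<alpha>, \<beta>) (\<Omega>, \<mu>) = trace ((2 *\<^sub>R \<beta> - transpose X ** \<alpha> ** X) ** \<mu>) - trace (Qr X ** \<alpha> ** Qr X ** \<Omega>)"
proof -
  have d: "\<Omega> = X ** \<mu> ** transpose X + Qr X ** \<Omega> ** Qr X" by (rule hl_decomp[OF assms])
  have "trace (\<alpha> ** \<Omega>) = trace (\<alpha> ** (X ** \<mu> ** transpose X)) + trace (\<alpha> ** (Qr X ** \<Omega> ** Qr X))"
    by (subst d) (simp add: matrix_add_ldistrib trace_add)
  also have "trace (\<alpha> ** (X ** \<mu> ** transpose X)) = trace (transpose X ** \<alpha> ** X ** \<mu>)"
    using trace_mul_sym[of "\<alpha> ** X ** \<mu>" "transpose X"] by (simp add: massoc)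
  also have "trace (\<alpha> ** (Qr X ** \<Omega> ** Qr X)) = trace (Qr X ** \<alpha> ** Qr X ** \<Omega>)"
    using trace_mul_sym[of "\<alpha> ** Qr X ** \<Omega>" "Qr X"] by (simp add: massoc)
  finally have "trace (\<alpha> ** \<Omega>) = trace (transpose X ** \<alpha> ** X ** \<mu>) + trace (Qr X ** \<alpha> ** Qr X ** \<Omega>)" .
  then show ?thesis
    by (simp add: gip_def mm_diff_right mm_scale_right trace_sub trace_scale)
qed

lemma skew_Q: "skew A \<Longrightarrow> skew (Qr X ** A ** Qr X)"
  using skew_conj[of A "Qr X"] by (simp add: tQ)

lemma h0_in:
  assumes "skew (fst \<xi>)" "skew (snd \<xi>)"
  shows "(hOm X \<xi>, heta X \<xi>) \<in> hlie X"
proof -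
  have sh: "skew (heta X \<xi>)"
    unfolding heta_def using assms skew_conj[of "fst \<xi>" "transpose X"]
    by (auto intro!: skew_diff skew_scale)
  have "skew (hOm X \<xi>)" unfolding hOm_def
    using skew_conj[OF sh, of X] skew_Q[OF assms(1)] by (rule skew_add)
  moreover have "hOm X \<xi> ** X = X ** heta X \<xi>"
    by (simp add: hOm_def mm_add_right massoc XQ2 QX)
  ultimately show ?thesis using sh by (simp add: hlie_def)
qed

lemma p0_in:
  assumes "skew (fst \<xi>)" "skew (snd \<xi>)"
  shows "(fst \<xi> - hOm X \<xi>, snd \<xi> - heta X \<xi>) \<in> plie X"
proof -
  have hin: "(hOm X \<xi>, heta X \<xi>) \<in> hlie X" by (rule h0_in[OF assms])
  then have sk: "skew (hOm X \<xi>)" "skew (heta X \<xi>)" by (auto simp: hlie_def)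
  have A: "transpose X ** hOm X \<xi> ** X = heta X \<xi>"
    by (simp add: hOm_def mm_add_right matrix_add_ldistrib massoc XQ2 QX)
  have B: "Qr X ** hOm X \<xi> ** Qr X = Qr X ** fst \<xi> ** Qr X"
    by (simp add: hOm_def mm_add_right matrix_add_ldistrib massoc QX2 QQ2 QQ)
  have 1: "2 *\<^sub>R (snd \<xi> - heta X \<xi>) - transpose X ** (fst \<xi> - hOm X \<xi>) ** X = 0"
    apply (simp only: mm_diff_left mm_diff_right A)
    by (simp add: heta_def vec_eq_iff algebra_simps)
  have 2: "Qr X ** (fst \<xi> - hOm X \<xi>) ** Qr X = 0"
    using B by (simp add: mm_diff_left mm_diff_right)
  show ?thesis
    unfolding plie_def
  proof (clarsimp, intro conjI ballI)
    show "skew (fst \<xi> - hOm X \<xi>)" "skew (snd \<xi> - heta X \<xi>)" using assms sk by (auto intro: skew_diff)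
    fix z assume z: "z \<in> hlie X"
    obtain a b where zab: "z = (a, b)" by force
    show "gip (fst \<xi> - hOm X \<xi>, snd \<xi> - heta X \<xi>) z = 0"
      using gip_h[of a b "fst \<xi> - hOm X \<xi>" "snd \<xi> - heta X \<xi>"] z unfolding zab 1 2
      by (simp add: trace_zero')
  qed
qed

lemma hp_zero:
  assumes "(\<Omega>, \<mu>) \<in> hlie X" "(\<Omega>, \<mu>) \<in> plie X"
  shows "\<Omega> = 0 \<and> \<mu> = 0"
proof -
  have sk: "skew \<Omega>" "skew \<mu>" and OX: "\<Omega> ** X = X ** \<mu>" using assms(1) by (auto simp: hlie_def)
  define C where "C = Qr X ** \<Omega> ** Qr X"
  have skC: "skew C" unfolding C_def by (rule skew_Q[OF sk(1)])
  have win: "(X ** \<mu> ** transpose X - C, \<mu>) \<in> hlie X"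
  proof -
    have "skew (X ** \<mu> ** transpose X - C)" by (intro skew_diff skew_conj sk skC)
    moreover have "(X ** \<mu> ** transpose X - C) ** X = X ** \<mu>"
      by (simp add: C_def mm_diff_right massoc QX)
    ultimately show ?thesis using sk by (simp add: hlie_def)
  qed
  have "gip (\<Omega>, \<mu>) (X ** \<mu> ** transpose X - C, \<mu>) = 0"
    using assms(2) win by (auto simp: plie_def)
  moreover have "transpose X ** \<Omega> ** X = \<mu>" by (simp add: massoc OX)
  moreover have "trace (C ** (X ** \<mu> ** transpose X)) = 0"
    by (simp add: C_def massoc QX2 trace_zero')
  ultimately have "trace (\<mu> ** \<mu>) + trace (C ** C) = 0"
    using gip_h[OF win, of \<Omega> \<mu>]
    by (simp add: C_def[symmetric] mm_diff_left trace_sub mm_diff_right mm_scale_right matrix_mul_assoc trace_scale)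
  moreover have "trace (\<mu> ** \<mu>) \<le> 0" "trace (C ** C) \<le> 0"
    using trace_sq_skew_le sk skC by auto
  ultimately have "trace (\<mu> ** \<mu>) = 0" "trace (C ** C) = 0" by linarith+
  then have "\<mu> = 0" "C = 0" using trace_sq_skew_0 sk skC by auto
  then show ?thesis using hl_decomp[OF assms(1)] C_def by simp
qed


lemma hlie_diff: "(a, b) \<in> hlie X \<Longrightarrow> (c, d) \<in> hlie X \<Longrightarrow> (a - c, b - d) \<in> hlie X"
  by (auto simp: hlie_def skew_diff mm_diff_right mm_diff_left)

lemma gip_diff: "gip (a - c, b - d) z = gip (a, b) z - gip (c, d) z"
  by (simp add: gip_def mm_diff_right trace_sub)
lemma gip_add: "gip (a + c, b + d) z = gip (a, b) z + gip (c, d) z"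
  by (simp add: gip_def mm_add_right trace_add)
lemma gip_neg: "gip (- a, - b) z = - gip (a, b) z"
  by (simp add: gip_def mm_neg_right trace_neg)

lemma plie_diff: "(a, b) \<in> plie X \<Longrightarrow> (c, d) \<in> plie X \<Longrightarrow> (a - c, b - d) \<in> plie X"
  by (auto simp: plie_def skew_diff gip_diff)
lemma plie_add: "(a, b) \<in> plie X \<Longrightarrow> (c, d) \<in> plie X \<Longrightarrow> (a + c, b + d) \<in> plie X"
  by (auto simp: plie_def skew_add gip_add)
lemma plie_neg: "(a, b) \<in> plie X \<Longrightarrow> (- a, - b) \<in> plie X"
  by (auto simp: plie_def skew_neg gip_neg)

lemma hcomp_props:
  assumes "skew (fst \<xi>)" "skew (snd \<xi>)"
  shows "hcomp X \<xi> \<in> hlie X \<and> (fst \<xi> - fst (hcomp X \<xi>), snd \<xi> - snd (hcomp X \<xi>)) \<in> plie X"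
proof -
  let ?P = "\<lambda>\<zeta>. \<zeta> \<in> hlie X \<and> (fst \<xi> - fst \<zeta>, snd \<xi> - snd \<zeta>) \<in> plie X"
  have ex: "?P (hOm X \<xi>, heta X \<xi>)" using h0_in[OF assms] p0_in[OF assms] by simp
  have un: "\<zeta> = (hOm X \<xi>, heta X \<xi>)" if "?P \<zeta>" for \<zeta>
  proof -
    obtain a b where ab: "\<zeta> = (a, b)" by force
    have "(a - hOm X \<xi>, b - heta X \<xi>) \<in> hlie X"
      using that ex ab by (auto intro: hlie_diff)
    moreover have "((fst \<xi> - hOm X \<xi>) - (fst \<xi> - a), (snd \<xi> - heta X \<xi>) - (snd \<xi> - b)) \<in> plie X"
      by (rule plie_diff) (use that ex ab in auto)
    then have "(a - hOm X \<xi>, b - heta X \<xi>) \<in> plie X" by simp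
    ultimately show ?thesis using hp_zero ab by fastforce
  qed
  have "?P (THE \<zeta>. ?P \<zeta>)" by (rule theI[of ?P, OF ex un])
  then show ?thesis unfolding hcomp_def .
qed

lemma conj_stab:
  assumes "orthogonal_matrix R" "orthogonal_matrix \<theta>" "R ** X = X ** \<theta>"
  shows "transpose R ** X = X ** transpose \<theta>"
proof -
  have "transpose R ** X = transpose R ** X ** (\<theta> ** transpose \<theta>)"
    using assms(2) by (simp add: orthogonal_matrix_def)
  also have "\<dots> = transpose R ** (R ** X) ** transpose \<theta>" by (simp add: assms(3) matrix_mul_assoc)
  also have "\<dots> = X ** transpose \<theta>" using assms(1) by (simp add: orthogonal_matrix_def matrix_mul_assoc)
  finally show ?thesis .
qed

lemma hlie_conj:
  assumes "orthogonal_matrix R" "orthogonal_matrix \<theta>" "R ** X = X ** \<theta>" "(\<Omega>, \<mu>) \<in> hlie X"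
  shows "(R ** \<Omega> ** transpose R, \<theta> ** \<mu> ** transpose \<theta>) \<in> hlie X"
proof -
  have sk: "skew \<Omega>" "skew \<mu>" and OX: "\<Omega> ** X = X ** \<mu>" using assms(4) by (auto simp: hlie_def)
  have TX: "transpose R ** X = X ** transpose \<theta>" by (rule conj_stab[OF assms(1-3)])
  have "R ** \<Omega> ** transpose R ** X = X ** (\<theta> ** \<mu> ** transpose \<theta>)"
    by (simp add: massoc TX assoc_rule[OF OX] assoc_rule[OF assms(3)])
  then show ?thesis using sk by (simp add: hlie_def skew_conj)
qed

lemma plie_conj:
  assumes "orthogonal_matrix R" "orthogonal_matrix \<theta>" "R ** X = X ** \<theta>" "(\<alpha>, \<beta>) \<in> plie X"
  shows "(R ** \<alpha> ** transpose R, \<theta> ** \<beta> ** transpose \<theta>) \<in> plie X"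
proof -
  have sk: "skew \<alpha>" "skew \<beta>" and orth: "\<And>z. z \<in> hlie X \<Longrightarrow> gip (\<alpha>, \<beta>) z = 0"
    using assms(4) by (auto simp: plie_def)
  have RT: "orthogonal_matrix (transpose R)" "orthogonal_matrix (transpose \<theta>)" using assms by auto
  have st: "transpose R ** X = X ** transpose \<theta>" by (rule conj_stab[OF assms(1-3)])
  have "gip (R ** \<alpha> ** transpose R, \<theta> ** \<beta> ** transpose \<theta>) (\<Omega>, \<mu>) = 0" if z: "(\<Omega>, \<mu>) \<in> hlie X" for \<Omega> \<mu>
  proof -
    have "(transpose R ** \<Omega> ** transpose (transpose R), transpose \<theta> ** \<mu> ** transpose (transpose \<theta>)) \<in> hlie X"
      by (rule hlie_conj[OF RT st z])
    then have "gip (\<alpha>, \<beta>) (transpose R ** \<Omega> ** R, transpose \<theta> ** \<mu> ** \<theta>) = 0" using orth by simp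
    moreover have "trace (R ** \<alpha> ** transpose R ** \<Omega>) = trace (\<alpha> ** (transpose R ** \<Omega> ** R))"
      using trace_mul_sym[of R "\<alpha> ** transpose R ** \<Omega>"] by (simp add: massoc)
    moreover have "trace (\<theta> ** \<beta> ** transpose \<theta> ** \<mu>) = trace (\<beta> ** (transpose \<theta> ** \<mu> ** \<theta>))"
      using trace_mul_sym[of \<theta> "\<beta> ** transpose \<theta> ** \<mu>"] by (simp add: massoc)
    ultimately show ?thesis by (simp add: gip_def)
  qed
  then show ?thesis using sk by (auto simp: plie_def skew_conj)
qed

end

lemma matrix_inv_orth: "orthogonal_matrix (R::real^'n^'n) \<Longrightarrow> matrix_inv R = transpose R"
  unfolding matrix_inv_def
proof (rule some_equality)
  assume o: "orthogonal_matrix R"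
  then show "R ** transpose R = mat 1 \<and> transpose R ** R = mat 1" by (simp add: orthogonal_matrix_def)
  fix A assume "R ** A = mat 1 \<and> A ** R = mat 1"
  then have "A = (transpose R ** R) ** A" using o by (simp add: orthogonal_matrix_def)
  also have "\<dots> = transpose R" using \<open>R ** A = mat 1 \<and> A ** R = mat 1\<close> by (simp add: massoc)
  finally show "A = transpose R" .
qed



lemma mexp_T_skew: "skew S \<Longrightarrow> transpose (mexp (t *\<^sub>R S)) = mexp ((- t) *\<^sub>R S)"
  by (simp add: mexp_transpose transpose_scalar skew_def)

lemma orth_mexp: "skew S \<Longrightarrow> orthogonal_matrix (mexp (t *\<^sub>R S))"
  unfolding orthogonal_matrix_def using mexp_minus_inv[of "t *\<^sub>R S"] mexp_minus_inv2[of "t *\<^sub>R S"]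
  by (simp add: mexp_T_skew)

lemma orth_mexp': "skew S \<Longrightarrow> orthogonal_matrix (mexp (- (t *\<^sub>R S)))"
  using orth_mexp[of S "- t"] by simp

lemma deriv_transpose:
  fixes f :: "real \<Rightarrow> real^'n^'m"
  shows "(f has_vector_derivative f') (at t) \<Longrightarrow> ((\<lambda>t. transpose (f t)) has_vector_derivative transpose f') (at t)"
  by (rule bounded_linear.has_vector_derivative[OF bl_transpose])

lemma ode_unique:
  fixes r q :: "real \<Rightarrow> real^'n^'n"
  assumes dr: "\<And>t. (r has_vector_derivative r t ** V t) (at t)"
    and dq: "\<And>t. (q has_vector_derivative q t ** V t) (at t)"
    and sk: "\<And>t. transpose (V t) = - V t"
    and orth: "\<And>t. orthogonal_matrix (q t)"
    and init: "r 0 = q 0"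
  shows "r = q"
proof -
  define s where "s t = r t ** transpose (q t)" for t
  have "(s has_vector_derivative 0) (at t within UNIV)" for t
  proof -
    have "(s has_vector_derivative (r t ** transpose (q t ** V t) + r t ** V t ** transpose (q t))) (at t)"
      unfolding s_def by (rule mm_deriv[OF dr deriv_transpose[OF dq]])
    moreover have "r t ** transpose (q t ** V t) + r t ** V t ** transpose (q t) = 0"
      by (simp add: matrix_transpose_mul sk mm_neg_left mm_neg_right massoc)
    ultimately show ?thesis by simp
  qed
  then obtain c where c: "\<And>t. s t = c" using has_vector_derivative_zero_constant[of UNIV s] by auto
  have "c = mat 1" using c[of 0] init orth[of 0] by (simp add: s_def orthogonal_matrix_def)
  show ?thesis
  proof
    fix t
    have "r t = s t ** q t" using orth[of t] by (simp add: s_def orthogonal_matrix_def massoc)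
    then show "r t = q t" using c \<open>c = mat 1\<close> by simp
  qed
qed


lemma hl_unique:
  fixes X :: "real^'k^'n" and q1 r1 :: "real \<Rightarrow> real^'n^'n" and q2 r2 :: "real \<Rightarrow> real^'k^'k"
  assumes XX: "transpose X ** X = mat 1"
    and dq1: "\<And>t. (q1 has_vector_derivative q1 t ** A1 t) (at t)"
    and dq2: "\<And>t. (q2 has_vector_derivative q2 t ** A2 t) (at t)"
    and dr1: "\<And>t. (r1 has_vector_derivative r1 t ** B1 t) (at t)"
    and dr2: "\<And>t. (r2 has_vector_derivative r2 t ** B2 t) (at t)"
    and Ap: "\<And>t. (A1 t, A2 t) \<in> plie X"
    and Bp: "\<And>t. (B1 t, B2 t) \<in> plie X"
    and oq1: "\<And>t. orthogonal_matrix (q1 t)" and oq2: "\<And>t. orthogonal_matrix (q2 t)"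
    and or1: "\<And>t. orthogonal_matrix (r1 t)" and or2: "\<And>t. orthogonal_matrix (r2 t)"
    and iota: "\<And>t. r1 t ** X ** transpose (r2 t) = q1 t ** X ** transpose (q2 t)"
    and init1: "r1 0 = q1 0" and init2: "r2 0 = q2 0"
  shows "r1 = q1 \<and> r2 = q2"
proof -
  have oo: "transpose (q1 t) ** (q1 t ** Y) = Y" "q1 t ** (transpose (q1 t) ** Y) = Y"
     "transpose (r1 t) ** (r1 t ** Y) = Y" "r1 t ** (transpose (r1 t) ** Y) = Y"
     "transpose (q2 t) ** (q2 t ** Z) = Z" "q2 t ** (transpose (q2 t) ** Z) = Z"
     "transpose (r2 t) ** (r2 t ** Z) = Z" "r2 t ** (transpose (r2 t) ** Z) = Z" for t and Y :: "real^'n^'n" and Z :: "real^'k^'k"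
    using oq1[of t] or1[of t] oq2[of t] or2[of t]
    by (auto simp: orthogonal_matrix_def intro!: assoc_rule[where C="mat 1", simplified])
  have ooX: "transpose (q1 t) ** (q1 t ** Y) = Y" for t and Y :: "real^'k^'n"
    using oq1[of t] by (auto simp: orthogonal_matrix_def intro!: assoc_rule[where C="mat 1", simplified])
  define s1 where "s1 t = transpose (q1 t) ** r1 t" for t
  define s2 where "s2 t = transpose (q2 t) ** r2 t" for t
  define D1 where "D1 t = transpose (q1 t) ** (r1 t ** B1 t) + transpose (q1 t ** A1 t) ** r1 t" for t
  define D2 where "D2 t = transpose (q2 t) ** (r2 t ** B2 t) + transpose (q2 t ** A2 t) ** r2 t" for t
  have ds1: "(s1 has_vector_derivative D1 t) (at t)" for t
    unfolding s1_def D1_def by (rule mm_deriv[OF deriv_transpose[OF dq1] dr1])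
  have ds2: "(s2 has_vector_derivative D2 t) (at t)" for t
    unfolding s2_def D2_def by (rule mm_deriv[OF deriv_transpose[OF dq2] dr2])
  have os1: "orthogonal_matrix (s1 t)" for t
    unfolding s1_def using oq1 or1 by (simp add: orthogonal_matrix_mul)
  have os2: "orthogonal_matrix (s2 t)" for t
    unfolding s2_def using oq2 or2 by (simp add: orthogonal_matrix_mul)
  have sX: "s1 t ** X = X ** s2 t" for t
  proof -
    have "s1 t ** X = transpose (q1 t) ** (r1 t ** X ** transpose (r2 t)) ** r2 t"
      using or2[of t] by (simp add: s1_def orthogonal_matrix_def massoc oo)
    also have "\<dots> = X ** s2 t"
      using iota[of t] by (simp add: s2_def massoc ooX)
    finally show ?thesis .
  qed
  have DX: "D1 t ** X = X ** D2 t" for t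
  proof -
    have "((\<lambda>t. s1 t ** X - X ** s2 t) has_vector_derivative (s1 t ** 0 + D1 t ** X - (X ** D2 t + 0 ** s2 t))) (at t)"
      by (intro has_vector_derivative_diff mm_deriv ds1 ds2 has_vector_derivative_const)
    moreover have "((\<lambda>t. s1 t ** X - X ** s2 t) has_vector_derivative 0) (at t)"
      using sX by simp
    ultimately have "s1 t ** 0 + D1 t ** X - (X ** D2 t + 0 ** s2 t) = 0"
      using vector_derivative_unique_at by blast
    then show ?thesis by simp
  qed
  define M1 where "M1 t = transpose (s1 t) ** D1 t" for t
  define M2 where "M2 t = transpose (s2 t) ** D2 t" for t
  have M1e: "M1 t = - (transpose (s1 t) ** A1 t ** transpose (transpose (s1 t))) + B1 t" for t
  proof -
    have skA: "transpose (A1 t) = - A1 t" using Ap[of t] by (simp add: plie_def skew_def)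
    show ?thesis using oq1[of t] or1[of t]
      by (simp add: M1_def D1_def s1_def matrix_add_ldistrib mm_diff_left matrix_transpose_mul skA mm_neg_left mm_neg_right
          massoc oo)
  qed
  have M2e: "M2 t = - (transpose (s2 t) ** A2 t ** transpose (transpose (s2 t))) + B2 t" for t
  proof -
    have skA: "transpose (A2 t) = - A2 t" using Ap[of t] by (simp add: plie_def skew_def)
    show ?thesis using oq2[of t] or2[of t]
      by (simp add: M2_def D2_def s2_def matrix_add_ldistrib mm_diff_left matrix_transpose_mul skA mm_neg_left mm_neg_right
          massoc oo)
  qed
  have Mp: "(M1 t, M2 t) \<in> plie X" for t
  proof -
    have "(transpose (s1 t) ** A1 t ** transpose (transpose (s1 t)), transpose (s2 t) ** A2 t ** transpose (transpose (s2 t))) \<in> plie X"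
      by (rule plie_conj[OF XX _ _ conj_stab[OF XX os1 os2 sX] Ap]) (simp_all add: os1 os2)
    then show ?thesis unfolding M1e M2e by (intro plie_add[OF XX] plie_neg[OF XX] Bp)
  qed
  have Mh: "(M1 t, M2 t) \<in> hlie X" for t
  proof -
    have "M1 t ** X = X ** M2 t"
      by (simp add: M1_def M2_def massoc DX assoc_rule[OF conj_stab[OF XX os1 os2 sX]])
    then show ?thesis using Mp[of t] by (simp add: plie_def hlie_def)
  qed
  have M0: "M1 t = 0 \<and> M2 t = 0" for t
    using hp_zero[OF XX Mh Mp] .
  have D0: "D1 t = 0" "D2 t = 0" for t
  proof -
    have "D1 t = s1 t ** M1 t" using os1[of t] by (simp add: M1_def massoc orthogonal_matrix_def assoc_rule[where C="mat 1", simplified])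
    then show "D1 t = 0" using M0 by simp
    have "D2 t = s2 t ** M2 t" using os2[of t] by (simp add: M2_def massoc orthogonal_matrix_def assoc_rule[where C="mat 1", simplified])
    then show "D2 t = 0" using M0 by simp
  qed
  obtain c1 where c1: "\<And>t. s1 t = c1"
    using has_vector_derivative_zero_constant[of UNIV s1] ds1 D0 by auto
  obtain c2 where c2: "\<And>t. s2 t = c2"
    using has_vector_derivative_zero_constant[of UNIV s2] ds2 D0 by auto
  have "c1 = mat 1" using c1[of 0] init1 oq1[of 0] by (simp add: s1_def orthogonal_matrix_def)
  have "c2 = mat 1" using c2[of 0] init2 oq2[of 0] by (simp add: s2_def orthogonal_matrix_def)
  have "r1 t = q1 t" for t
  proof -
    have "r1 t = q1 t ** s1 t" by (simp add: s1_def massoc oo)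
    then show ?thesis using c1 \<open>c1 = mat 1\<close> by simp
  qed
  moreover have "r2 t = q2 t" for t
  proof -
    have "r2 t = q2 t ** s2 t" by (simp add: s2_def massoc oo)
    then show ?thesis using c2 \<open>c2 = mat 1\<close> by simp
  qed
  ultimately show ?thesis by auto
qed


lemma qcomp_deriv:
  fixes x h :: "real^'n^'n"
  shows "((\<lambda>t. mexp (t *\<^sub>R x) ** mexp ((- t) *\<^sub>R h)) has_vector_derivative
     (mexp (t *\<^sub>R x) ** mexp ((- t) *\<^sub>R h)) ** (mexp (t *\<^sub>R h) ** (x - h) ** mexp ((- t) *\<^sub>R h))) (at t)"
proof -
  have e: "(\<lambda>t. mexp ((- t) *\<^sub>R h)) = (\<lambda>t. mexp (t *\<^sub>R (- h)))" by simp
  have d2: "((\<lambda>t. mexp ((- t) *\<^sub>R h)) has_vector_derivative mexp ((- t) *\<^sub>R h) ** (- h)) (at t)"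
    unfolding e using mexp_deriv[of "- h" t] by simp
  have D: "((\<lambda>t. mexp (t *\<^sub>R x) ** mexp ((- t) *\<^sub>R h)) has_vector_derivative
     (mexp (t *\<^sub>R x) ** (mexp ((- t) *\<^sub>R h) ** (- h)) + (mexp (t *\<^sub>R x) ** x) ** mexp ((- t) *\<^sub>R h))) (at t)"
    by (rule mm_deriv[OF mexp_deriv d2])
  have FG: "mexp ((- t) *\<^sub>R h) ** mexp (t *\<^sub>R h) = mat 1"
    using mexp_minus_inv2[of "t *\<^sub>R h"] by simp
  have FG2: "mexp (- (t *\<^sub>R h)) ** (mexp (t *\<^sub>R h) ** Y) = Y" for Y :: "real^'n^'n"
    using assoc_rule[OF FG, of Y] by simp
  have Fh: "mexp (- (t *\<^sub>R h)) ** h = h ** mexp (- (t *\<^sub>R h))"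
    using mexp_intertwine[of "(- t) *\<^sub>R h" h "(- t) *\<^sub>R h"] by (simp add: mm_scale_right mm_scale_left mm_neg_left mm_neg_right)
  have "(mexp (t *\<^sub>R x) ** mexp ((- t) *\<^sub>R h)) ** (mexp (t *\<^sub>R h) ** (x - h) ** mexp ((- t) *\<^sub>R h))
     = mexp (t *\<^sub>R x) ** (mexp ((- t) *\<^sub>R h) ** (- h)) + (mexp (t *\<^sub>R x) ** x) ** mexp ((- t) *\<^sub>R h)"
    by (simp add: massoc FG2 mm_diff_left mm_diff_right mm_neg_left Fh assoc_rule[OF Fh])
  then show ?thesis using D by simp
qed

theorem lemma5p12:
  fixes X :: "real^'k^'n" and \<xi> :: "('n,'k) gelt"
  assumes X: "X \<in> stiefel"
    and xi: "skew (fst \<xi>)" "skew (snd \<xi>)"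
  defines "bhat \<equiv> (\<lambda>t. iotapi X (gexp (gscale t \<xi>)))"
    and "q \<equiv> (\<lambda>t. gmul (gexp (gscale t \<xi>)) (gexp (gscale (- t) (hcomp X \<xi>))))"
  shows "(\<forall>t. bhat t = mexp (t *\<^sub>R fst \<xi>) ** X ** mexp (- t *\<^sub>R snd \<xi>))
    \<and> (\<forall>t. q t = (mexp (t *\<^sub>R fst \<xi>) ** mexp (- t *\<^sub>R fst (hcomp X \<xi>)),
                   mexp (t *\<^sub>R snd \<xi>) ** mexp (- t *\<^sub>R snd (hcomp X \<xi>))))
    \<and> horizontal_lift X bhat gone q
    \<and> (\<forall>r. horizontal_lift X bhat gone r \<longrightarrow> r = q)
    \<and> curve_deriv q (\<lambda>t. dL (q t) (Ad (gexp (gscale t (hcomp X \<xi>))) (pcomp X \<xi>)))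
    \<and> (\<forall>r. r 0 = gone \<and> curve_deriv r (\<lambda>t. dL (r t) (Ad (gexp (gscale t (hcomp X \<xi>))) (pcomp X \<xi>)))
           \<longrightarrow> r = q)"
proof -
  have XX: "transpose X ** X = mat 1" using X by (simp add: stiefel_def)
  obtain h1 h2 where hc: "hcomp X \<xi> = (h1, h2)" by force
  obtain x1 x2 where xs: "\<xi> = (x1, x2)" by force
  have hp: "(h1, h2) \<in> hlie X" "(x1 - h1, x2 - h2) \<in> plie X"
    using hcomp_props[OF XX xi] hc xs by auto
  have skh: "skew h1" "skew h2" and hX: "h1 ** X = X ** h2" using hp(1) by (auto simp: hlie_def)
  have skx: "skew x1" "skew x2" using xi xs by auto
  have pc: "pcomp X \<xi> = (x1 - h1, x2 - h2)" unfolding pcomp_def hc by (simp add: xs)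
  have q_eq: "q t = (mexp (t *\<^sub>R x1) ** mexp ((- t) *\<^sub>R h1), mexp (t *\<^sub>R x2) ** mexp ((- t) *\<^sub>R h2))" for t
    unfolding q_def hc by (simp add: gmul_def gexp_def gscale_def xs)
  have b_eq: "bhat t = mexp (t *\<^sub>R x1) ** X ** transpose (mexp (t *\<^sub>R x2))" for t
    by (simp add: bhat_def iotapi_def gexp_def gscale_def xs)
  define V where "V t = Ad (gexp (gscale t (hcomp X \<xi>))) (pcomp X \<xi>)" for t
  have V_eq: "V t = (mexp (t *\<^sub>R h1) ** (x1 - h1) ** mexp ((- t) *\<^sub>R h1),
                     mexp (t *\<^sub>R h2) ** (x2 - h2) ** mexp ((- t) *\<^sub>R h2))" for t
    unfolding V_def hc pc by (simp add: Ad_def gmul_def ginv_def gexp_def gscale_def hc pc matrix_inv_orth orth_mexp skh mexp_T_skew)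
  have oq: "orthogonal_matrix (fst (q t))" "orthogonal_matrix (snd (q t))" for t
    by (simp_all add: q_eq orthogonal_matrix_mul orth_mexp orth_mexp' skh skx)
  have dq1: "((\<lambda>s. fst (q s)) has_vector_derivative fst (q t) ** fst (V t)) (at t)" for t
    unfolding q_eq V_eq fst_conv by (rule qcomp_deriv)
  have dq2: "((\<lambda>s. snd (q s)) has_vector_derivative snd (q t) ** snd (V t)) (at t)" for t
    unfolding q_eq V_eq snd_conv by (rule qcomp_deriv)
  have cdq: "curve_deriv q (\<lambda>t. dL (q t) (V t))"
    unfolding curve_deriv_def dL_def gmul_def using dq1 dq2 by simp
  have GX: "mexp (t *\<^sub>R h1) ** X = X ** mexp (t *\<^sub>R h2)" for t
    by (rule mexp_intertwine) (simp add: mm_scale_right mm_scale_left hX)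
  have Vp: "V t \<in> plie X" for t
    using plie_conj[OF XX orth_mexp[OF skh(1)] orth_mexp[OF skh(2)] GX hp(2)]
    by (simp add: V_eq mexp_T_skew skh)
  have skV: "transpose (fst (V t)) = - fst (V t)" "transpose (snd (V t)) = - snd (V t)" for t
    using Vp[of t] by (auto simp: plie_def skew_def)
  have iq: "iotapi X (q t) = bhat t" for t
  proof -
    have FX: "mexp (- (t *\<^sub>R h1)) ** X = X ** mexp (- (t *\<^sub>R h2))" using GX[of "- t"] by simp
    have o2: "mexp (- (t *\<^sub>R h2)) ** transpose (mexp (- (t *\<^sub>R h2))) = mat 1"
      using orth_mexp'[OF skh(2), of t] by (simp add: orthogonal_matrix_def)
    show ?thesis
      by (simp add: iotapi_def q_eq b_eq matrix_transpose_mul massoc assoc_rule[OF FX] assoc_rule[OF o2])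
  qed
  have q0: "q 0 = gone" by (simp add: q_eq gone_def mexp_zero)
  have hlq: "horizontal_lift X bhat gone q"
    unfolding horizontal_lift_def
  proof (intro conjI allI exI)
    show "q 0 = gone" by (rule q0)
    show "q t \<in> Gset" for t using oq[of t] by (simp add: Gset_def)
    show "curve_deriv q (\<lambda>t. dL (q t) (V t))" by (rule cdq)
    show "iotapi X (q t) = bhat t" for t by (rule iq)
    show "gmul (ginv (q t)) (dL (q t) (V t)) \<in> plie X" for t
    proof -
      have "gmul (ginv (q t)) (dL (q t) (V t)) = V t"
        using oq[of t] by (simp add: gmul_def ginv_def dL_def matrix_inv_orth massoc orthogonal_matrix_def
            assoc_rule[where C="mat 1", simplified])
      then show ?thesis using Vp by simp
    qed
  qed
  have uq1: "\<forall>r. horizontal_lift X bhat gone r \<longrightarrow> r = q"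
  proof (intro allI impI)
    fix r assume "horizontal_lift X bhat gone r"
    then obtain r' where r0: "r 0 = gone" and rG: "\<And>t. r t \<in> Gset" and cd: "curve_deriv r r'"
      and ir: "\<And>t. iotapi X (r t) = bhat t" and rp: "\<And>t. gmul (ginv (r t)) (r' t) \<in> plie X"
      unfolding horizontal_lift_def by blast
    have or: "orthogonal_matrix (fst (r t))" "orthogonal_matrix (snd (r t))" for t
      using rG[of t] by (auto simp: Gset_def)
    have rr: "fst (r t) ** (transpose (fst (r t)) ** fst (r' t)) = fst (r' t)"
      "snd (r t) ** (transpose (snd (r t)) ** snd (r' t)) = snd (r' t)" for t
      using or[of t] by (simp_all add: massoc orthogonal_matrix_def assoc_rule[where C="mat 1", simplified])
    have dr1: "((\<lambda>s. fst (r s)) has_vector_derivative fst (r t) ** (transpose (fst (r t)) ** fst (r' t))) (at t)" for t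
      using cd rr by (simp add: curve_deriv_def)
    have dr2: "((\<lambda>s. snd (r s)) has_vector_derivative snd (r t) ** (transpose (snd (r t)) ** snd (r' t))) (at t)" for t
      using cd rr by (simp add: curve_deriv_def)
    have Bp: "(transpose (fst (r t)) ** fst (r' t), transpose (snd (r t)) ** snd (r' t)) \<in> plie X" for t
      using rp[of t] or[of t] by (simp add: gmul_def ginv_def matrix_inv_orth)
    have Ap: "(fst (V t), snd (V t)) \<in> plie X" for t using Vp[of t] by simp
    have iota: "fst (r t) ** X ** transpose (snd (r t)) = fst (q t) ** X ** transpose (snd (q t))" for t
      using ir[of t] iq[of t] by (simp add: iotapi_def)
    have "(\<lambda>t. fst (r t)) = (\<lambda>t. fst (q t)) \<and> (\<lambda>t. snd (r t)) = (\<lambda>t. snd (q t))"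
      by (rule hl_unique[OF XX dq1 dq2 dr1 dr2 Ap Bp oq or iota]) (simp_all add: r0 q0)
    then show "r = q" by (auto simp: fun_eq_iff prod_eq_iff)
  qed
  have uq2: "\<forall>r. r 0 = gone \<and> curve_deriv r (\<lambda>t. dL (r t) (V t)) \<longrightarrow> r = q"
  proof (intro allI impI)
    fix r assume a: "r 0 = gone \<and> curve_deriv r (\<lambda>t. dL (r t) (V t))"
    have dr1: "((\<lambda>s. fst (r s)) has_vector_derivative fst (r t) ** fst (V t)) (at t)" for t
      using a by (simp add: curve_deriv_def dL_def gmul_def)
    have dr2: "((\<lambda>s. snd (r s)) has_vector_derivative snd (r t) ** snd (V t)) (at t)" for t
      using a by (simp add: curve_deriv_def dL_def gmul_def)
    have "(\<lambda>t. fst (r t)) = (\<lambda>t. fst (q t))"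
      by (rule ode_unique[OF dr1 dq1 skV(1) oq(1)]) (simp add: a q0)
    moreover have "(\<lambda>t. snd (r t)) = (\<lambda>t. snd (q t))"
      by (rule ode_unique[OF dr2 dq2 skV(2) oq(2)]) (simp add: a q0)
    ultimately show "r = q" by (auto simp: fun_eq_iff prod_eq_iff)
  qed
  have c1: "\<forall>t. bhat t = mexp (t *\<^sub>R fst \<xi>) ** X ** mexp (- t *\<^sub>R snd \<xi>)"
    using mexp_T_skew[OF skx(2)] by (simp add: b_eq xs)
  have c2: "\<forall>t. q t = (mexp (t *\<^sub>R fst \<xi>) ** mexp (- t *\<^sub>R fst (hcomp X \<xi>)),
                   mexp (t *\<^sub>R snd \<xi>) ** mexp (- t *\<^sub>R snd (hcomp X \<xi>)))"
    unfolding hc by (simp add: q_eq xs)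
  show ?thesis
    using c1 c2 hlq uq1 cdq uq2 unfolding V_def by blast
qed

end
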